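(* Let $\Gamma$ be a weighted digraph with vertex set $\{1,\dots,n\}$, $n>1$, without loops and with strictly positive arc weights, with Laplacian matrix $L$ and in-forest dimension $d$. For every $\lambda\neq0$, $$\operatorname{adj}(\lambda I+L)=\sum_{k=0}^{n-d}s'_{n-d-k}(\lambda)\,(-L/\lambda)^k,\qquad\text{where } s'_i(\lambda)=\sum_{j=0}^{i}\sigma_j\lambda^{n-j-1},\ i=0,\dots,n-d.$$
   Context: $W=(w_{ij})$ is the matrix of arc weights ($w_{ij}>0$ iff there is an arc $i\to j$, else $0$). The Laplacian $L=(\ell_{ij})$: $\ell_{ij}=-w_{ij}$ for $j\ne i$, $\ell_{ii}=\sum_{k\ne i}w_{ik}$. The weight of a subgraph is the product of its arc weights (1 if no arcs); the weight of a set of subgraphs is the sum of their weights. A converging tree is a weakly connected digraph with one vertex (the root) of outdegree 0 and all others of outdegree 1; an in-forest is a spanning subgraph of $\Gamma$ whose weak components are converging trees. The in-forest dimension $d$ is the minimal number of trees in an in-forest. $\sigma_k$ is the total weight of in-forests of $\Gamma$ with $k$ arcs. $\operatorname{adj}A$ is the transposed matrix of cofactors. *)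

theory Defs
  imports "Jordan_Normal_Form.Determinant"
begin

text \<open>Weighted digraphs on the vertex set {0..<n} (the paper's {1,...,n}, shifted by one).
  W i j is the weight of the arc i -> j; there is an arc iff W i j > 0.\<close>

definition arcs :: "nat \<Rightarrow> (nat \<Rightarrow> nat \<Rightarrow> real) \<Rightarrow> (nat \<times> nat) set" where
  "arcs n W = {(i,j). i < n \<and> j < n \<and> W i j > 0}"

definition laplacian :: "nat \<Rightarrow> (nat \<Rightarrow> nat \<Rightarrow> real) \<Rightarrow> real mat" where
  "laplacian n W = mat n n (\<lambda>(i,j). if i = j then (\<Sum>k\<in>{0..<n} - {i}. W i k) else - W i j)"

definition sg_weight :: "(nat \<Rightarrow> nat \<Rightarrow> real) \<Rightarrow> (nat \<times> nat) set \<Rightarrow> real" where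
  "sg_weight W F = (\<Prod>(i,j)\<in>F. W i j)"

definition weak_rel :: "nat set \<Rightarrow> (nat \<times> nat) set \<Rightarrow> (nat \<times> nat) set" where
  "weak_rel V F = (Id_on V \<union> F \<union> F\<inverse>)\<^sup>*"

definition outdeg :: "(nat \<times> nat) set \<Rightarrow> nat \<Rightarrow> nat" where
  "outdeg F v = card {w. (v, w) \<in> F}"

definition converging_tree :: "nat set \<Rightarrow> (nat \<times> nat) set \<Rightarrow> bool" where
  "converging_tree V F \<longleftrightarrow> V \<noteq> {} \<and> F \<subseteq> V \<times> V \<and>
     (\<forall>u\<in>V. \<forall>v\<in>V. (u, v) \<in> weak_rel V F) \<and>
     (\<exists>!r. r \<in> V \<and> outdeg F r = 0) \<and>
     (\<forall>v\<in>V. outdeg F v = 0 \<or> outdeg F v = 1)"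

definition weak_components :: "nat \<Rightarrow> (nat \<times> nat) set \<Rightarrow> nat set set" where
  "weak_components n F = {0..<n} // weak_rel {0..<n} F"

definition in_forest :: "nat \<Rightarrow> (nat \<Rightarrow> nat \<Rightarrow> real) \<Rightarrow> (nat \<times> nat) set \<Rightarrow> bool" where
  "in_forest n W F \<longleftrightarrow> F \<subseteq> arcs n W \<and>
     (\<forall>C\<in>weak_components n F. converging_tree C (F \<inter> (C \<times> C)))"

definition in_forest_dim :: "nat \<Rightarrow> (nat \<Rightarrow> nat \<Rightarrow> real) \<Rightarrow> nat" where
  "in_forest_dim n W = Min {card (weak_components n F) | F. in_forest n W F}"

definition sigma :: "nat \<Rightarrow> (nat \<Rightarrow> nat \<Rightarrow> real) \<Rightarrow> nat \<Rightarrow> real" where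
  "sigma n W k = (\<Sum>F\<in>{F. in_forest n W F \<and> card F = k}. sg_weight W F)"

definition s_prime :: "nat \<Rightarrow> (nat \<Rightarrow> nat \<Rightarrow> real) \<Rightarrow> nat \<Rightarrow> real \<Rightarrow> real" where
  "s_prime n W i lam = (\<Sum>j = 0..i. sigma n W j * lam powi (int n - int j - 1))"

end

theory Submission
  imports Defs
begin

definition acyc :: "nat \<Rightarrow> (nat \<Rightarrow> nat) \<Rightarrow> bool" where
  "acyc n c \<longleftrightarrow> (\<forall>v<n. \<exists>k. c ((c^^k) v) = (c^^k) v)"

definition graphF :: "nat \<Rightarrow> (nat \<Rightarrow> nat) \<Rightarrow> (nat \<times> nat) set" where
  "graphF n c = (\<lambda>v. (v, c v)) ` {v. v < n \<and> c v \<noteq> v}"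

definition nfix :: "nat \<Rightarrow> (nat \<Rightarrow> nat) \<Rightarrow> nat" where
  "nfix n c = card {v. v < n \<and> c v \<noteq> v}"

definition good :: "nat \<Rightarrow> (nat \<Rightarrow> nat \<Rightarrow> real) \<Rightarrow> (nat \<Rightarrow> nat) \<Rightarrow> bool" where
  "good n W c \<longleftrightarrow> c \<in> {0..<n} \<rightarrow>\<^sub>E {0..<n} \<and> acyc n c \<and> (\<forall>v<n. c v \<noteq> v \<longrightarrow> W v (c v) > 0)"

lemma funpow_fixed: "c r = r \<Longrightarrow> (c^^a) r = r"
  by (induction a) auto

lemma reach:
  assumes F: "\<And>x y. (x,y) \<in> F \<Longrightarrow> y = c x \<and> c x \<noteq> x"
    and r: "c r = r"
    and rz: "(r,z) \<in> (Id_on X \<union> F \<union> F\<inverse>)\<^sup>*"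
  shows "\<exists>a. (c^^a) z = r"
  using rz
proof (induction rule: rtrancl_induct)
  case base
  then show ?case by (intro exI[of _ 0]) simp
next
  case (step y z)
  then obtain a where a: "(c^^a) y = r" by blast
  from step(2) consider "z = y" | "(y,z) \<in> F" | "(z,y) \<in> F" by blast
  then show ?case
  proof cases
    case 1 then show ?thesis using a by blast
  next
    case 2
    have z: "z = c y" "c y \<noteq> y" using F[OF 2] by auto
    show ?thesis
    proof (cases a)
      case 0
      then have "y = r" using a by simp
      then show ?thesis using r z by simp
    next
      case (Suc b)
      then have "(c^^b) (c y) = r" using a by (simp add: funpow_Suc_right del: funpow.simps)
      then show ?thesis using z by blast
    qed
  next
    case 3
    have y: "y = c z" using F[OF 3] by auto
    have "(c^^Suc a) z = r" using a y by (simp add: funpow_Suc_right del: funpow.simps)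
    then show ?thesis by blast
  qed
qed

lemma weak_rel_mono_V:
  assumes "F \<subseteq> V \<times> V" "(x,y) \<in> weak_rel V F" "x \<in> V"
  shows "y \<in> V"
  using assms(2,3) unfolding weak_rel_def
  by (induction rule: rtrancl_induct) (use assms(1) in auto)

lemma weak_rel_sym:
  assumes "(x,y) \<in> weak_rel V F" shows "(y,x) \<in> weak_rel V F"
proof -
  have "(x,y) \<in> ((Id_on V \<union> F \<union> F\<inverse>)\<inverse>)\<^sup>*"
  proof -
    have "(Id_on V \<union> F \<union> F\<inverse>)\<inverse> = Id_on V \<union> F \<union> F\<inverse>" by auto
    then show ?thesis using assms unfolding weak_rel_def by simp
  qed
  then have "(x,y) \<in> ((Id_on V \<union> F \<union> F\<inverse>)\<^sup>*)\<inverse>" by (simp add: rtrancl_converse)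
  then show ?thesis unfolding weak_rel_def by simp
qed

lemma weak_rel_trans:
  "(x,y) \<in> weak_rel V F \<Longrightarrow> (y,z) \<in> weak_rel V F \<Longrightarrow> (x,z) \<in> weak_rel V F"
  unfolding weak_rel_def by (rule rtrancl_trans)

lemma weak_rel_base: "(x,y) \<in> F \<Longrightarrow> (x,y) \<in> weak_rel V F"
  unfolding weak_rel_def by auto

lemma weak_rel_class:
  assumes "(x0,u) \<in> weak_rel V F" "(u,z) \<in> weak_rel V F"
  shows "(u,z) \<in> weak_rel (weak_rel V F `` {x0}) (F \<inter> (weak_rel V F `` {x0}) \<times> (weak_rel V F `` {x0}))"
  using assms(2,1) unfolding weak_rel_def[of V F]
proof (induction rule: rtrancl_induct)
  case base
  then show ?case unfolding weak_rel_def by simp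
next
  case (step y z)
  let ?C = "weak_rel V F `` {x0}"
  have y: "y \<in> ?C" using step weak_rel_trans unfolding weak_rel_def by (metis Image_singleton_iff)
  have "(y,z) \<in> weak_rel V F" using step(2) unfolding weak_rel_def by auto
  then have z: "z \<in> ?C" using y weak_rel_trans by (metis Image_singleton_iff)
  have "(y,z) \<in> Id_on ?C \<union> (F \<inter> ?C \<times> ?C) \<union> (F \<inter> ?C \<times> ?C)\<inverse>"
    using step(2) y z by auto
  then have "(y,z) \<in> weak_rel ?C (F \<inter> ?C \<times> ?C)" unfolding weak_rel_def by auto
  then show ?case using step weak_rel_trans unfolding weak_rel_def by blast
qed

lemma in_forest_good:
  assumes noloop: "\<forall>i<n. W i i = 0" and inf: "in_forest n W F"
  shows "\<exists>c. good n W c \<and> F = graphF n c"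
proof -
  let ?V = "{0..<n}"
  let ?r = "weak_rel ?V F"
  have Farc: "F \<subseteq> arcs n W" and trees: "\<And>C. C \<in> weak_components n F \<Longrightarrow> converging_tree C (F \<inter> C \<times> C)"
    using inf unfolding in_forest_def by auto
  have Fe: "v < n \<and> w < n \<and> W v w > 0 \<and> v \<noteq> w" if "(v,w) \<in> F" for v w
    using Farc that noloop unfolding arcs_def by auto
  have FV: "F \<subseteq> ?V \<times> ?V" using Fe by auto
  have refl: "(x,x) \<in> ?r" for x unfolding weak_rel_def by simp
  have inC: "(v,w) \<in> F \<Longrightarrow> w \<in> ?r `` {v}" for v w using weak_rel_base by fastforce
  have outfin: "finite {w. (v,w) \<in> F \<inter> C \<times> C}" for v C
    by (rule finite_subset[of _ ?V]) (use Fe in auto)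
  have uniq: "w = w'" if "(v,w) \<in> F" "(v,w') \<in> F" for v w w'
  proof -
    let ?C = "?r `` {v}"
    have v: "v < n" using Fe that by auto
    have "?C \<in> weak_components n F" unfolding weak_components_def
      using v by (intro quotientI) auto
    then have tr: "converging_tree ?C (F \<inter> ?C \<times> ?C)" by (rule trees)
    have vC: "v \<in> ?C" using refl by auto
    let ?S = "{w. (v,w) \<in> F \<inter> ?C \<times> ?C}"
    have ww: "w \<in> ?S" "w' \<in> ?S" using that inC vC by auto
    have "card ?S = 0 \<or> card ?S = 1" using tr vC unfolding converging_tree_def outdeg_def by auto
    moreover have "card ?S \<noteq> 0" using ww outfin by (metis card_0_eq empty_iff)
    ultimately have "card ?S = 1" by simp
    then show ?thesis using ww by (metis card_1_singletonE singletonD)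
  qed
  define c where "c v = (if v < n then (if \<exists>w. (v,w) \<in> F then (SOME w. (v,w) \<in> F) else v) else undefined)" for v
  have cF: "c v = w" if "(v,w) \<in> F" for v w
  proof -
    have v: "v < n" using Fe that by auto
    have "(v, SOME w. (v,w) \<in> F) \<in> F" using that by (rule someI)
    then show ?thesis using uniq that v unfolding c_def by auto
  qed
  have cN: "c v = v" if "v < n" "\<not> (\<exists>w. (v,w) \<in> F)" for v
    using that unfolding c_def by auto
  have graph: "F = graphF n c"
  proof
    show "F \<subseteq> graphF n c"
    proof
      fix x assume "x \<in> F"
      then obtain v w where x: "x = (v,w)" "(v,w) \<in> F" by (cases x) auto
      then show "x \<in> graphF n c" unfolding graphF_def using cF[OF x(2)] Fe[OF x(2)] by auto
    qed
  next
    show "graphF n c \<subseteq> F"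
    proof
      fix x assume "x \<in> graphF n c"
      then obtain v where v: "x = (v, c v)" "v < n" "c v \<noteq> v" unfolding graphF_def by auto
      then obtain w where "(v,w) \<in> F" using cN by blast
      then show "x \<in> F" using cF v by auto
    qed
  qed
  have PiE: "c \<in> ?V \<rightarrow>\<^sub>E ?V"
  proof
    fix v assume "v \<in> ?V"
    then show "c v \<in> ?V"
      by (cases "\<exists>w. (v,w) \<in> F") (use cF cN Fe in auto)
  next
    fix v assume "v \<notin> ?V" then show "c v = undefined" unfolding c_def by auto
  qed
  have pos: "\<forall>v<n. c v \<noteq> v \<longrightarrow> W v (c v) > 0"
  proof (intro allI impI)
    fix v assume "v < n" "c v \<noteq> v"
    then obtain w where "(v,w) \<in> F" using cN by blast
    then show "W v (c v) > 0" using cF Fe by auto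
  qed
  have acyc: "acyc n c" unfolding acyc_def
  proof (intro allI impI)
    fix v assume v: "v < n"
    let ?C = "?r `` {v}"
    have "?C \<in> weak_components n F" unfolding weak_components_def
      using v by (intro quotientI) auto
    then have tr: "converging_tree ?C (F \<inter> ?C \<times> ?C)" by (rule trees)
    then obtain rt where rt: "rt \<in> ?C" "outdeg (F \<inter> ?C \<times> ?C) rt = 0"
      unfolding converging_tree_def by auto
    have vC: "v \<in> ?C" using refl by auto
    have rtn: "rt < n" using weak_rel_mono_V[OF FV, of v rt] rt v by auto
    have crt: "c rt = rt"
    proof (rule ccontr)
      assume ne: "c rt \<noteq> rt"
      then obtain w where w: "(rt,w) \<in> F" using cN rtn by blast
      then have "w \<in> ?C" using rt weak_rel_trans weak_rel_base by fastforce
      then have "w \<in> {w. (rt,w) \<in> F \<inter> ?C \<times> ?C}" using w rt by auto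
      then have "outdeg (F \<inter> ?C \<times> ?C) rt \<noteq> 0" unfolding outdeg_def
        using outfin by (metis card_0_eq empty_iff)
      then show False using rt by simp
    qed
    have conn: "(rt, v) \<in> weak_rel ?C (F \<inter> ?C \<times> ?C)"
      using tr rt vC unfolding converging_tree_def by auto
    have Fc: "y = c x \<and> c x \<noteq> x" if "(x,y) \<in> F \<inter> ?C \<times> ?C" for x y
    proof -
      have "(x,y) \<in> F" using that by auto
      from cF[OF this] Fe[OF this] show ?thesis by auto
    qed
    have "\<exists>a. (c^^a) v = rt"
      by (rule reach[of "F \<inter> ?C \<times> ?C" c rt v ?C, OF Fc crt]) (use conn in \<open>auto simp: weak_rel_def\<close>)
    then show "\<exists>k. c ((c ^^ k) v) = (c ^^ k) v" using crt by auto
  qed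
  show ?thesis using PiE acyc pos graph unfolding good_def by blast
qed

lemma good_forest:
  assumes g: "good n W c"
  shows "in_forest n W (graphF n c)" "card (graphF n c) = nfix n c"
    "card (weak_components n (graphF n c)) = card {v. v < n \<and> c v = v}"
proof -
  let ?V = "{0..<n}"
  define F where "F = graphF n c"
  let ?r = "weak_rel ?V F"
  have PiE: "c \<in> ?V \<rightarrow>\<^sub>E ?V" and ac: "acyc n c" and pos: "\<forall>v<n. c v \<noteq> v \<longrightarrow> W v (c v) > 0"
    using g unfolding good_def by auto
  have cV: "v < n \<Longrightarrow> c v < n" for v using PiE by auto
  have Fc: "y = c x \<and> c x \<noteq> x" if "(x,y) \<in> F" for x y using that unfolding F_def graphF_def by auto
  have Fn: "x < n" if "(x,y) \<in> F" for x y using that unfolding F_def graphF_def by auto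
  have FV: "F \<subseteq> ?V \<times> ?V" unfolding F_def graphF_def using cV by auto
  have refl: "(x,x) \<in> ?r" for x unfolding weak_rel_def by simp
  have itV: "v < n \<Longrightarrow> (c^^k) v < n" for v k by (induction k) (auto simp: cV)
  have itr: "v < n \<Longrightarrow> (v, (c^^k) v) \<in> ?r" for v k
  proof (induction k)
    case 0 then show ?case using refl by simp
  next
    case (Suc k)
    have "((c^^k) v, c ((c^^k) v)) \<in> ?r"
    proof (cases "c ((c^^k) v) = (c^^k) v")
      case True then show ?thesis using refl by simp
    next
      case False
      then have "((c^^k) v, c ((c^^k) v)) \<in> F" unfolding F_def graphF_def using itV[OF Suc.prems] by auto
      then show ?thesis by (rule weak_rel_base)
    qed
    then show ?case using Suc weak_rel_trans by fastforce
  qed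
  have rootuniq: "r1 = r2" if "c r1 = r1" "c r2 = r2" "(r1, r2) \<in> ?r" for r1 r2
  proof -
    have "\<exists>a. (c^^a) r2 = r1"
      by (rule reach[OF Fc that(1), where X="{0..<n}"]) (use that(3) in \<open>unfold weak_rel_def\<close>)
    then show ?thesis using funpow_fixed[of c r2, OF that(2)] by auto
  qed
  have rootex: "\<exists>rt. c rt = rt \<and> rt < n \<and> (v, rt) \<in> ?r" if vn: "v < n" for v
  proof -
    obtain k where "c ((c^^k) v) = (c^^k) v" using ac vn unfolding acyc_def by blast
    then show ?thesis using itV itr vn by blast
  qed
  have classV: "C \<subseteq> ?V" if "C \<in> ?V // ?r" for C
    using that weak_rel_mono_V[OF FV] by (auto elim!: quotientE)
  have outd: "outdeg (F \<inter> C \<times> C) u = (if c u \<noteq> u then 1 else 0)" if CC: "C \<in> ?V // ?r" and uC: "u \<in> C" for C u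
  proof -
    obtain x0 where x0: "x0 \<in> ?V" "C = ?r `` {x0}" using CC by (auto elim!: quotientE)
    have un: "u < n" using classV[OF CC] uC by auto
    show ?thesis
    proof (cases "c u = u")
      case True
      then have S: "{w. (u,w) \<in> F \<inter> C \<times> C} = {}" using Fc by blast
      show ?thesis unfolding outdeg_def S using True by simp
    next
      case False
      then have uF: "(u, c u) \<in> F" unfolding F_def graphF_def using un by auto
      then have "c u \<in> C" using x0 uC weak_rel_base weak_rel_trans by fastforce
      then have S: "{w. (u,w) \<in> F \<inter> C \<times> C} = {c u}" using Fc uF uC by blast
      show ?thesis unfolding outdeg_def S using False by simp
    qed
  qed
  have tree: "converging_tree C (F \<inter> C \<times> C)" if C: "C \<in> ?V // ?r" for C
  proof -
    obtain x0 where x0: "x0 \<in> ?V" "C = ?r `` {x0}" using C by (auto elim!: quotientE)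
    have x0C: "x0 \<in> C" using x0 refl by auto
    have conn: "\<forall>u\<in>C. \<forall>v\<in>C. (u, v) \<in> weak_rel C (F \<inter> C \<times> C)"
    proof (intro ballI)
      fix u v assume "u \<in> C" "v \<in> C"
      then have xu: "(x0,u) \<in> ?r" and xv: "(x0,v) \<in> ?r" using x0 by auto
      have "(u,v) \<in> ?r" by (rule weak_rel_trans[OF weak_rel_sym[OF xu] xv])
      then show "(u, v) \<in> weak_rel C (F \<inter> C \<times> C)" using weak_rel_class[OF \<open>(x0,u) \<in> ?r\<close>] x0 by simp
    qed
    obtain rt where rt: "c rt = rt" "rt < n" "(x0, rt) \<in> ?r" using rootex x0 by auto
    have ex1: "\<exists>!r. r \<in> C \<and> outdeg (F \<inter> C \<times> C) r = 0"
    proof (rule ex1I[of _ rt])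
      show "rt \<in> C \<and> outdeg (F \<inter> C \<times> C) rt = 0" using rt x0 outd[OF C] by auto
    next
      fix r assume r: "r \<in> C \<and> outdeg (F \<inter> C \<times> C) r = 0"
      then have cr: "c r = r" using outd[OF C] by (auto split: if_splits)
      have xr: "(x0, r) \<in> ?r" using r x0 by auto
      have "(r, rt) \<in> ?r" by (rule weak_rel_trans[OF weak_rel_sym[OF xr] rt(3)])
      then show "r = rt" using rootuniq cr rt by blast
    qed
    have od: "\<forall>v\<in>C. outdeg (F \<inter> C \<times> C) v = 0 \<or> outdeg (F \<inter> C \<times> C) v = 1"
      using outd[OF C] by simp
    have sub: "F \<inter> C \<times> C \<subseteq> C \<times> C" by blast
    have ne: "C \<noteq> {}" using x0C by blast
    show ?thesis unfolding converging_tree_def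
      using ne sub conn ex1 od by blast
  qed
  have arcs: "F \<subseteq> arcs n W" unfolding arcs_def F_def graphF_def using cV pos by auto
  show "in_forest n W (graphF n c)" unfolding in_forest_def weak_components_def
    using arcs tree F_def by auto
  have inj: "inj_on (\<lambda>v. (v, c v)) {v. v < n \<and> c v \<noteq> v}" by (auto intro: inj_onI)
  show "card (graphF n c) = nfix n c" unfolding graphF_def nfix_def
    using card_image[OF inj] by simp
  have bij: "bij_betw (\<lambda>v. ?r `` {v}) {v. v < n \<and> c v = v} (?V // ?r)"
  proof (rule bij_betw_imageI)
    show "inj_on (\<lambda>v. ?r `` {v}) {v. v < n \<and> c v = v}"
    proof (rule inj_onI)
      fix a b assume a: "a \<in> {v. v < n \<and> c v = v}" and b: "b \<in> {v. v < n \<and> c v = v}"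
        and e: "?r `` {a} = ?r `` {b}"
      then have "(a,b) \<in> ?r" using refl by blast
      then show "a = b" using rootuniq a b by auto
    qed
  next
    show "(\<lambda>v. ?r `` {v}) ` {v. v < n \<and> c v = v} = ?V // ?r"
    proof
      show "(\<lambda>v. ?r `` {v}) ` {v. v < n \<and> c v = v} \<subseteq> ?V // ?r"
        by (auto intro: quotientI)
    next
      show "?V // ?r \<subseteq> (\<lambda>v. ?r `` {v}) ` {v. v < n \<and> c v = v}"
      proof
        fix C assume "C \<in> ?V // ?r"
        then obtain x0 where x0: "x0 \<in> ?V" "C = ?r `` {x0}" by (auto elim!: quotientE)
        obtain rt where rt: "c rt = rt" "rt < n" "(x0, rt) \<in> ?r" using rootex x0 by auto
        have "?r `` {x0} = ?r `` {rt}"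
        proof
          show "?r `` {x0} \<subseteq> ?r `` {rt}" using weak_rel_trans[OF weak_rel_sym[OF rt(3)]] by blast
          show "?r `` {rt} \<subseteq> ?r `` {x0}" using weak_rel_trans[OF rt(3)] by blast
        qed
        then show "C \<in> (\<lambda>v. ?r `` {v}) ` {v. v < n \<and> c v = v}" using x0 rt by auto
      qed
    qed
  qed
  show "card (weak_components n (graphF n c)) = card {v. v < n \<and> c v = v}"
    unfolding weak_components_def F_def[symmetric] using bij_betw_same_card[OF bij] by simp
qed

lemma card_fix_nfix: "card {v. v < n \<and> c v = v} + nfix n c = n"
proof -
  have "{v. v < n \<and> c v = v} \<union> {v. v < n \<and> c v \<noteq> v} = {..<n}" by auto
  moreover have "card ({v. v < n \<and> c v = v} \<union> {v. v < n \<and> c v \<noteq> v}) =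
      card {v. v < n \<and> c v = v} + card {v. v < n \<and> c v \<noteq> v}"
    by (rule card_Un_disjoint) auto
  ultimately show ?thesis unfolding nfix_def by simp
qed

lemma good_id: "good n W (restrict (\<lambda>v. v) {0..<n})"
  unfolding good_def acyc_def by (auto intro: exI[of _ 0])

lemma graphF_id: "graphF n (restrict (\<lambda>v. v) {0..<n}) = {}"
  unfolding graphF_def by auto

lemma finite_forests: "finite {F. in_forest n W F}"
proof (rule finite_subset[of _ "Pow ({0..<n} \<times> {0..<n})"])
  show "{F. in_forest n W F} \<subseteq> Pow ({0..<n} \<times> {0..<n})"
    unfolding in_forest_def arcs_def by auto
qed auto

lemma dim_le:
  assumes "in_forest n W F" shows "in_forest_dim n W \<le> card (weak_components n F)"
proof -
  have "finite ((\<lambda>F. card (weak_components n F)) ` {F. in_forest n W F})"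
    using finite_forests by auto
  moreover have "{card (weak_components n F) |F. in_forest n W F} = (\<lambda>F. card (weak_components n F)) ` {F. in_forest n W F}"
    by auto
  ultimately show ?thesis unfolding in_forest_dim_def using assms by (auto intro!: Min_le)
qed

lemma dim_ge1:
  assumes "n > 0" shows "in_forest_dim n W \<ge> 1"
proof -
  let ?S = "{card (weak_components n F) |F. in_forest n W F}"
  have eq: "?S = (\<lambda>F. card (weak_components n F)) ` {F. in_forest n W F}" by auto
  have fin: "finite ?S" unfolding eq using finite_forests by auto
  have "in_forest n W {}" using good_forest(1)[OF good_id] graphF_id by metis
  then have ne: "?S \<noteq> {}" by auto
  have "x \<ge> 1" if "x \<in> ?S" for x
  proof -
    obtain F where x: "x = card (weak_components n F)" using \<open>x \<in> ?S\<close> by auto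
    have eqq: "weak_components n F = (\<lambda>x. weak_rel {0..<n} F `` {x}) ` {0..<n}"
      unfolding weak_components_def quotient_def by auto
    have "weak_components n F \<noteq> {}" "finite (weak_components n F)"
      unfolding eqq using assms by auto
    then show ?thesis using x by (simp add: Suc_le_eq card_gt_0_iff)
  qed
  then show ?thesis unfolding in_forest_dim_def using Min_in[OF fin ne] by blast
qed

lemma good_nfix_le:
  assumes "good n W c" shows "nfix n c \<le> n - in_forest_dim n W"
proof -
  have "in_forest_dim n W \<le> card {v. v < n \<and> c v = v}"
    using dim_le[OF good_forest(1)[OF assms]] good_forest(3)[OF assms] by simp
  then show ?thesis using card_fix_nfix[of n c] by linarith
qed

lemma det_expand:
  fixes A :: "real mat" and s :: "nat \<Rightarrow> nat \<Rightarrow> real" and m :: "nat \<Rightarrow> nat \<Rightarrow> nat \<Rightarrow> real"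
  assumes A: "A \<in> carrier_mat n n"
    and e: "\<And>v u. v < n \<Longrightarrow> u < n \<Longrightarrow> A $$ (v,u) = (\<Sum>w\<in>{0..<n}. s v w * m v w u)"
  shows "det A = (\<Sum>c\<in>{0..<n} \<rightarrow>\<^sub>E {0..<n}. (\<Prod>v\<in>{0..<n}. s v (c v)) * det (mat n n (\<lambda>(v,u). m v (c v) u)))"
proof -
  let ?P = "{p. p permutes {0..<n}}"
  let ?C = "{0..<n} \<rightarrow>\<^sub>E {0..<n}"
  have pin: "p i < n" if "p \<in> ?P" "i < n" for p i
    using that permutes_in_image[of p "{0..<n}" i] by auto
  have "det A = (\<Sum>p\<in>?P. signof p * (\<Prod>i=0..<n. A $$ (i, p i)))" by (rule det_def'[OF A])
  also have "\<dots> = (\<Sum>p\<in>?P. signof p * (\<Prod>i\<in>{0..<n}. \<Sum>w\<in>{0..<n}. s i w * m i w (p i)))"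
    by (intro sum.cong refl arg_cong2[where f="(*)"] prod.cong) (auto simp: e pin)
  also have "\<dots> = (\<Sum>p\<in>?P. signof p * (\<Sum>c\<in>?C. \<Prod>i\<in>{0..<n}. s i (c i) * m i (c i) (p i)))"
    by (subst prod_sum_PiE) auto
  also have "\<dots> = (\<Sum>p\<in>?P. \<Sum>c\<in>?C. (\<Prod>i\<in>{0..<n}. s i (c i)) * (signof p * (\<Prod>i\<in>{0..<n}. m i (c i) (p i))))"
    by (simp add: sum_distrib_left prod.distrib mult_ac)
  also have "\<dots> = (\<Sum>c\<in>?C. \<Sum>p\<in>?P. (\<Prod>i\<in>{0..<n}. s i (c i)) * (signof p * (\<Prod>i\<in>{0..<n}. m i (c i) (p i))))"
    by (rule sum.swap)
  also have "\<dots> = (\<Sum>c\<in>?C. (\<Prod>i\<in>{0..<n}. s i (c i)) * det (mat n n (\<lambda>(v,u). m v (c v) u)))"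
  proof (intro sum.cong refl)
    fix c assume "c \<in> ?C"
    have "det (mat n n (\<lambda>(v,u). m v (c v) u)) = (\<Sum>p\<in>?P. signof p * (\<Prod>i=0..<n. mat n n (\<lambda>(v,u). m v (c v) u) $$ (i, p i)))"
      by (rule det_def') auto
    also have "\<dots> = (\<Sum>p\<in>?P. signof p * (\<Prod>i\<in>{0..<n}. m i (c i) (p i)))"
      by (intro sum.cong refl arg_cong2[where f="(*)"] prod.cong) (auto simp: pin)
    finally show "(\<Sum>p\<in>?P. (\<Prod>i\<in>{0..<n}. s i (c i)) * (signof p * (\<Prod>i\<in>{0..<n}. m i (c i) (p i)))) =
        (\<Prod>i\<in>{0..<n}. s i (c i)) * det (mat n n (\<lambda>(v,u). m v (c v) u))"
      by (simp add: sum_distrib_left)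
  qed
  finally show ?thesis .
qed

definition mm :: "(nat \<Rightarrow> nat) \<Rightarrow> nat \<Rightarrow> nat \<Rightarrow> real" where
  "mm c v u = (if u = v then 1 else 0) - (if c v \<noteq> v \<and> u = c v then 1 else 0)"

definition Mc :: "nat \<Rightarrow> (nat \<Rightarrow> nat) \<Rightarrow> real mat" where
  "Mc n c = mat n n (\<lambda>(v,u). mm c v u)"

lemma detM_acyc:
  assumes PiE: "c \<in> {0..<n} \<rightarrow>\<^sub>E {0..<n}" and ac: "acyc n c"
  shows "det (Mc n c) = 1"
proof -
  let ?P = "{p. p permutes {0..<n}}"
  define dep where "dep v = (LEAST k. c ((c^^k) v) = (c^^k) v)" for v
  have dep_fix: "c ((c^^dep v) v) = (c^^dep v) v" if "v < n" for v
    using ac that unfolding acyc_def dep_def by (meson LeastI_ex)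
  have dep_lt: "dep (c v) < dep v" if v: "v < n" and cv: "c v \<noteq> v" for v
  proof -
    have "dep v \<noteq> 0" using dep_fix[OF v] cv by (metis funpow_0)
    then obtain e where e: "dep v = Suc e" by (cases "dep v") auto
    have "(c^^Suc e) v = (c^^e) (c v)" by (simp add: funpow_Suc_right del: funpow.simps)
    then have "c ((c^^e) (c v)) = (c^^e) (c v)" using dep_fix[OF v] e by simp
    then have "dep (c v) \<le> e" unfolding dep_def by (rule Least_le)
    then show ?thesis using e by simp
  qed
  have pin: "p i < n" if "p \<in> ?P" "i < n" for p i
    using that permutes_in_image[of p "{0..<n}" i] by auto
  have zero: "(\<Prod>i=0..<n. Mc n c $$ (i, p i)) = 0" if p: "p \<in> ?P" "p \<noteq> id" for p
  proof (rule ccontr)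
    assume nz: "(\<Prod>i=0..<n. Mc n c $$ (i, p i)) \<noteq> 0"
    have step: "p i = i \<or> (c i \<noteq> i \<and> p i = c i)" if i: "i < n" for i
    proof -
      have "Mc n c $$ (i, p i) \<noteq> 0" using nz i by (auto simp: prod_zero_iff)
      then show ?thesis using i pin[OF p(1) i] unfolding Mc_def mm_def by (auto split: if_splits)
    qed
    have le: "dep (p i) \<le> dep i" if "i \<in> {0..<n}" for i
      using step[of i] dep_lt[of i] that by auto
    obtain j where j: "j < n" "p j \<noteq> j"
    proof -
      have "\<exists>j. p j \<noteq> j" using p(2) by (auto simp: fun_eq_iff)
      then obtain j where "p j \<noteq> j" by blast
      moreover have "j \<in> {0..<n}" using p(1) \<open>p j \<noteq> j\<close> unfolding permutes_def by auto
      ultimately show ?thesis using that by auto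
    qed
    have lt: "dep (p j) < dep j" using step[OF j(1)] j dep_lt[of j] by auto
    have "(\<Sum>i\<in>{0..<n}. dep (p i)) < (\<Sum>i\<in>{0..<n}. dep i)"
      by (rule sum_strict_mono_ex1) (use le lt j in auto)
    moreover have "(\<Sum>i\<in>{0..<n}. dep i) = (\<Sum>i\<in>{0..<n}. dep (p i))"
      using sum.permute[of p "{0..<n}" dep] p(1) by (simp add: comp_def)
    ultimately show False by simp
  qed
  have z: "(\<Sum>p\<in>?P - {id}. signof p * (\<Prod>i=0..<n. Mc n c $$ (i, p i))) = 0"
    by (rule sum.neutral) (use zero in auto)
  have "det (Mc n c) = (\<Sum>p\<in>?P. signof p * (\<Prod>i=0..<n. Mc n c $$ (i, p i)))"
    by (rule det_def') (auto simp: Mc_def)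
  also have "\<dots> = signof (id::nat\<Rightarrow>nat) * (\<Prod>i=0..<n. Mc n c $$ (i, id i)) +
      (\<Sum>p\<in>?P - {id}. signof p * (\<Prod>i=0..<n. Mc n c $$ (i, p i)))"
    by (rule sum.remove) (auto simp: finite_permutations permutes_id)
  also have "\<dots> = signof (id::nat\<Rightarrow>nat) * (\<Prod>i=0..<n. Mc n c $$ (i, id i))"
    using z by simp
  also have "\<dots> = 1"
    by (auto simp: Mc_def mm_def intro!: prod.neutral)
  finally show ?thesis .
qed

lemma detM_cyc:
  assumes PiE: "c \<in> {0..<n} \<rightarrow>\<^sub>E {0..<n}" and ac: "\<not> acyc n c"
  shows "det (Mc n c) = 0"
proof -
  define R where "R v \<longleftrightarrow> (\<exists>k. c ((c^^k) v) = (c^^k) v)" for v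
  define x where "x = vec n (\<lambda>v. if R v then 0 else (1::real))"
  have cV: "v < n \<Longrightarrow> c v < n" for v using PiE by auto
  have Rc: "R v = R (c v)" if "c v \<noteq> v" for v
  proof
    assume "R v"
    then obtain k where k: "c ((c^^k) v) = (c^^k) v" unfolding R_def by blast
    then have "k \<noteq> 0" using that by (metis funpow_0)
    then obtain e where e: "k = Suc e" by (cases k) auto
    have "(c^^Suc e) v = (c^^e) (c v)" by (simp add: funpow_Suc_right del: funpow.simps)
    then show "R (c v)" using k e unfolding R_def by metis
  next
    assume "R (c v)"
    then obtain k where k: "c ((c^^k) (c v)) = (c^^k) (c v)" unfolding R_def by blast
    have "(c^^Suc k) v = (c^^k) (c v)" by (simp add: funpow_Suc_right del: funpow.simps)
    then show "R v" using k unfolding R_def by metis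
  qed
  have "det (Mc n c) = 0 \<longleftrightarrow> (\<exists>v. v \<in> carrier_vec n \<and> v \<noteq> 0\<^sub>v n \<and> Mc n c *\<^sub>v v = 0\<^sub>v n)"
    by (rule det_0_iff_vec_prod_zero) (auto simp: Mc_def)
  moreover have "x \<in> carrier_vec n" unfolding x_def by simp
  moreover have "x \<noteq> 0\<^sub>v n"
  proof -
    obtain v where v: "v < n" "\<not> R v" using ac unfolding acyc_def R_def by blast
    then have "x $ v = 1" unfolding x_def by simp
    then show ?thesis using v by (metis index_zero_vec(1) zero_neq_one)
  qed
  moreover have "Mc n c *\<^sub>v x = 0\<^sub>v n"
  proof (rule eq_vecI)
    fix v assume v: "v < dim_vec (0\<^sub>v n :: real vec)"
    then have vn: "v < n" by simp
    have dx: "dim_vec x = n" unfolding x_def by simp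
    have "(Mc n c *\<^sub>v x) $ v = (\<Sum>u\<in>{0..<n}. mm c v u * x $ u)"
      using vn dx unfolding Mc_def by (simp add: scalar_prod_def)
    also have "\<dots> = (\<Sum>u\<in>{0..<n}. (if u = v then x $ u else 0)) - (\<Sum>u\<in>{0..<n}. (if c v \<noteq> v \<and> u = c v then x $ u else 0))"
      unfolding sum_subtractf[symmetric] by (rule sum.cong) (auto simp: mm_def)
    also have "\<dots> = x $ v - (if c v \<noteq> v then x $ (c v) else 0)"
      using vn cV[OF vn] by (simp add: sum.delta)
    also have "\<dots> = 0"
    proof (cases "c v = v")
      case True
      then have "R v" unfolding R_def by (auto intro: exI[of _ 0])
      then show ?thesis using True vn unfolding x_def by simp
    next
      case False
      then show ?thesis using Rc[OF False] vn cV[OF vn] unfolding x_def by simp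
    qed
    finally show "(Mc n c *\<^sub>v x) $ v = 0\<^sub>v n $ v" using vn by simp
  qed (auto simp: Mc_def)
  ultimately show ?thesis by blast
qed

definition AL :: "nat \<Rightarrow> (nat \<Rightarrow> nat \<Rightarrow> real) \<Rightarrow> real \<Rightarrow> real mat" where
  "AL n W lam = lam \<cdot>\<^sub>m 1\<^sub>m n + laplacian n W"

definition wt :: "nat \<Rightarrow> (nat \<Rightarrow> nat \<Rightarrow> real) \<Rightarrow> (nat \<Rightarrow> nat) \<Rightarrow> real" where
  "wt n W c = (\<Prod>v\<in>{v. v < n \<and> c v \<noteq> v}. W v (c v))"

lemma AL_carrier: "AL n W lam \<in> carrier_mat n n"
  unfolding AL_def laplacian_def by auto

lemma AL_index: "v < n \<Longrightarrow> u < n \<Longrightarrow> AL n W lam $$ (v,u) =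
  (\<Sum>w\<in>{0..<n}. (if w = v then lam else W v w) *
     (if w = v then (if u = v then 1 else 0) else (if u = v then 1 else 0) - (if u = w then 1 else 0)))"
proof -
  assume v: "v < n" and u: "u < n"
  let ?f = "\<lambda>w. (if w = v then lam else W v w) *
     (if w = v then (if u = v then 1 else 0) else (if u = v then 1 else 0) - (if u = w then 1 else (0::real)))"
  have "(\<Sum>w\<in>{0..<n}. ?f w) = ?f v + (\<Sum>w\<in>{0..<n} - {v}. ?f w)"
    by (rule sum.remove) (use v in auto)
  also have "(\<Sum>w\<in>{0..<n} - {v}. ?f w) = (\<Sum>w\<in>{0..<n} - {v}. W v w * ((if u = v then 1 else 0) - (if u = w then 1 else 0)))"
    by (rule sum.cong) auto
  finally have eq: "(\<Sum>w\<in>{0..<n}. ?f w) = (if u = v then lam else 0) + (\<Sum>w\<in>{0..<n} - {v}. W v w * ((if u = v then 1 else 0) - (if u = w then 1 else 0)))"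
    by simp
  show "AL n W lam $$ (v,u) = (\<Sum>w\<in>{0..<n}. ?f w)"
  proof (cases "u = v")
    case True
    have "(\<Sum>w\<in>{0..<n} - {v}. W v w * ((if u = v then 1 else 0) - (if u = w then 1 else 0))) = (\<Sum>w\<in>{0..<n} - {v}. W v w)"
      by (rule sum.cong) (use True in auto)
    then show ?thesis using eq True v unfolding AL_def laplacian_def by simp
  next
    case False
    have "(\<Sum>w\<in>{0..<n} - {v}. W v w * ((if u = v then 1 else 0) - (if u = w then 1 else 0))) = (\<Sum>w\<in>{0..<n} - {v}. if w = u then - W v u else 0)"
      by (rule sum.cong) (use False in auto)
    also have "\<dots> = - W v u" using False u by (simp add: sum.delta')
    finally show ?thesis using eq False v u unfolding AL_def laplacian_def by simp
  qed
qed

lemma prod_s: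
  assumes "c \<in> {0..<n} \<rightarrow>\<^sub>E {0..<n}"
  shows "(\<Prod>v\<in>{0..<n}. (if c v = v then lam else W v (c v))) = lam ^ (n - nfix n c) * wt n W c"
proof -
  have "(\<Prod>v\<in>{0..<n}. (if c v = v then lam else W v (c v))) =
     (\<Prod>v\<in>{0..<n} \<inter> {v. c v = v}. lam) * (\<Prod>v\<in>{0..<n} \<inter> - {v. c v = v}. W v (c v))"
    by (rule prod.If_cases) simp
  also have "{0..<n} \<inter> {v. c v = v} = {v. v < n \<and> c v = v}" by auto
  also have "{0..<n} \<inter> - {v. c v = v} = {v. v < n \<and> c v \<noteq> v}" by auto
  finally show ?thesis using card_fix_nfix[of n c] unfolding wt_def
    by (simp add: prod_constant) (metis add_diff_cancel_right')
qed

lemma det_AL: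
  "det (AL n W lam) = (\<Sum>c\<in>{c\<in>{0..<n} \<rightarrow>\<^sub>E {0..<n}. acyc n c}. lam ^ (n - nfix n c) * wt n W c)"
proof -
  let ?C = "{0..<n} \<rightarrow>\<^sub>E {0..<n}"
  have "det (AL n W lam) = (\<Sum>c\<in>?C. (\<Prod>v\<in>{0..<n}. (\<lambda>v w. if w = v then lam else W v w) v (c v)) *
     det (mat n n (\<lambda>(v,u). (\<lambda>v w u. if w = v then (if u = v then 1 else 0) else (if u = v then 1 else 0) - (if u = w then 1 else 0)) v (c v) u)))"
    by (rule det_expand[OF AL_carrier]) (simp add: AL_index)
  also have "\<dots> = (\<Sum>c\<in>?C. lam ^ (n - nfix n c) * wt n W c * det (Mc n c))"
  proof (rule sum.cong[OF refl])
    fix c assume c: "c \<in> ?C"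
    have "mat n n (\<lambda>(v,u). (\<lambda>v w u. if w = v then (if u = v then 1 else 0) else (if u = v then 1 else 0) - (if u = w then 1 else 0)) v (c v) u) = Mc n c"
      unfolding Mc_def mm_def by (rule eq_matI) auto
    moreover have "(\<Prod>v\<in>{0..<n}. (\<lambda>v w. if w = v then lam else W v w) v (c v)) = lam ^ (n - nfix n c) * wt n W c"
      using prod_s[OF c, of lam W] by (simp add: eq_commute[of "c _"])
    ultimately show "(\<Prod>v\<in>{0..<n}. (\<lambda>v w. if w = v then lam else W v w) v (c v)) *
     det (mat n n (\<lambda>(v,u). (\<lambda>v w u. if w = v then (if u = v then 1 else 0) else (if u = v then 1 else 0) - (if u = w then 1 else 0)) v (c v) u)) =
     lam ^ (n - nfix n c) * wt n W c * det (Mc n c)" by simp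
  qed
  also have "\<dots> = (\<Sum>c\<in>?C. if acyc n c then lam ^ (n - nfix n c) * wt n W c else 0)"
    by (rule sum.cong[OF refl]) (auto simp: detM_acyc detM_cyc)
  also have "\<dots> = (\<Sum>c\<in>{c\<in>?C. acyc n c}. lam ^ (n - nfix n c) * wt n W c)"
    by (simp add: sum.inter_filter[symmetric] finite_PiE)
  finally show ?thesis .
qed

lemma sg_weight_graphF: "sg_weight W (graphF n c) = wt n W c"
proof -
  have inj: "inj_on (\<lambda>v. (v, c v)) {v. v < n \<and> c v \<noteq> v}" by (auto intro: inj_onI)
  show ?thesis unfolding sg_weight_def graphF_def wt_def
    by (subst prod.reindex[OF inj]) simp
qed

lemma graphF_inj: "inj_on (graphF n) ({0..<n} \<rightarrow>\<^sub>E {0..<n})"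
proof (rule inj_onI)
  fix c1 c2 assume c1: "c1 \<in> {0..<n} \<rightarrow>\<^sub>E {0..<n}" and c2: "c2 \<in> {0..<n} \<rightarrow>\<^sub>E {0..<n}"
    and e: "graphF n c1 = graphF n c2"
  show "c1 = c2"
  proof
    fix v
    show "c1 v = c2 v"
    proof (cases "v < n")
      case False then show ?thesis using c1 c2 by (auto simp: PiE_def extensional_def)
    next
      case True
      show ?thesis
      proof (cases "c1 v = v \<and> c2 v = v")
        case True then show ?thesis by simp
      next
        case False
        then consider "c1 v \<noteq> v" | "c2 v \<noteq> v" by blast
        then show ?thesis
        proof cases
          case 1
          then have "(v, c1 v) \<in> graphF n c2" using e \<open>v < n\<close> unfolding graphF_def by auto
          then show ?thesis unfolding graphF_def by auto
        next
          case 2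
          then have "(v, c2 v) \<in> graphF n c1" using e \<open>v < n\<close> unfolding graphF_def by auto
          then show ?thesis unfolding graphF_def by auto
        qed
      qed
    qed
  qed
qed

lemma sigma_eq:
  assumes nonneg: "\<forall>i<n. \<forall>j<n. W i j \<ge> 0" and noloop: "\<forall>i<n. W i i = 0"
  shows "sigma n W k = (\<Sum>c\<in>{c\<in>{0..<n} \<rightarrow>\<^sub>E {0..<n}. acyc n c \<and> nfix n c = k}. wt n W c)"
proof -
  let ?C = "{0..<n} \<rightarrow>\<^sub>E {0..<n}"
  let ?G = "{c\<in>?C. good n W c \<and> nfix n c = k}"
  have bij: "bij_betw (graphF n) ?G {F. in_forest n W F \<and> card F = k}"
  proof (rule bij_betw_imageI)
    show "inj_on (graphF n) ?G" by (rule inj_on_subset[OF graphF_inj]) auto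
    show "graphF n ` ?G = {F. in_forest n W F \<and> card F = k}"
    proof
      show "graphF n ` ?G \<subseteq> {F. in_forest n W F \<and> card F = k}"
        using good_forest(1,2) by auto
      show "{F. in_forest n W F \<and> card F = k} \<subseteq> graphF n ` ?G"
      proof
        fix F assume F: "F \<in> {F. in_forest n W F \<and> card F = k}"
        then obtain c where c: "good n W c" "F = graphF n c" using in_forest_good noloop by blast
        then have "nfix n c = k" using good_forest(2)[OF c(1)] F by simp
        then show "F \<in> graphF n ` ?G" using c unfolding good_def by auto
      qed
    qed
  qed
  have "sigma n W k = (\<Sum>c\<in>?G. sg_weight W (graphF n c))"
    unfolding sigma_def by (rule sum.reindex_bij_betw[OF bij, symmetric])
  also have "\<dots> = (\<Sum>c\<in>?G. wt n W c)" by (simp add: sg_weight_graphF)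
  also have "\<dots> = (\<Sum>c\<in>{c\<in>?C. acyc n c \<and> nfix n c = k}. wt n W c)"
  proof (rule sum.mono_neutral_left)
    show "finite {c\<in>?C. acyc n c \<and> nfix n c = k}" by (simp add: finite_PiE)
    show "?G \<subseteq> {c\<in>?C. acyc n c \<and> nfix n c = k}" unfolding good_def by auto
    show "\<forall>c\<in>{c\<in>?C. acyc n c \<and> nfix n c = k} - ?G. wt n W c = 0"
    proof
      fix c assume c: "c \<in> {c\<in>?C. acyc n c \<and> nfix n c = k} - ?G"
      then obtain v where v: "v < n" "c v \<noteq> v" "\<not> W v (c v) > 0" unfolding good_def by auto
      have "c v < n" using c v by auto
      then have "W v (c v) = 0" using nonneg v by force
      then show "wt n W c = 0" unfolding wt_def using v
        by (intro prod_zero) auto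
    qed
  qed
  finally show ?thesis .
qed

lemma sigma_zero:
  assumes noloop: "\<forall>i<n. W i i = 0" and k: "k > n - in_forest_dim n W"
  shows "sigma n W k = 0"
proof -
  have "{F. in_forest n W F \<and> card F = k} = {}"
  proof (rule ccontr)
    assume "{F. in_forest n W F \<and> card F = k} \<noteq> {}"
    then obtain F where F: "in_forest n W F" "card F = k" by auto
    then obtain c where c: "good n W c" "F = graphF n c" using in_forest_good noloop by blast
    then have "nfix n c = k" using good_forest(2)[OF c(1)] F by simp
    then show False using good_nfix_le[OF c(1)] k by simp
  qed
  then show ?thesis unfolding sigma_def by (metis sum.empty)
qed

lemma det_AL_sigma:
  assumes nonneg: "\<forall>i<n. \<forall>j<n. W i j \<ge> 0" and noloop: "\<forall>i<n. W i i = 0"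
  shows "det (AL n W lam) = (\<Sum>k=0..n. sigma n W k * lam ^ (n - k))"
proof -
  let ?C = "{0..<n} \<rightarrow>\<^sub>E {0..<n}"
  let ?A = "{c\<in>?C. acyc n c}"
  have le: "nfix n c \<in> {0..n}" for c using card_fix_nfix[of n c] by auto
  have "det (AL n W lam) = (\<Sum>c\<in>?A. lam ^ (n - nfix n c) * wt n W c)" by (rule det_AL)
  also have "\<dots> = (\<Sum>k\<in>{0..n}. \<Sum>c\<in>{c\<in>?A. nfix n c = k}. lam ^ (n - nfix n c) * wt n W c)"
    by (rule sum.group[symmetric]) (use le in \<open>auto simp: finite_PiE\<close>)
  also have "\<dots> = (\<Sum>k=0..n. sigma n W k * lam ^ (n - k))"
  proof (rule sum.cong[OF refl])
    fix k assume "k \<in> {0..n}"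
    have "(\<Sum>c\<in>{c\<in>?A. nfix n c = k}. lam ^ (n - nfix n c) * wt n W c) =
        (\<Sum>c\<in>{c\<in>?C. acyc n c \<and> nfix n c = k}. lam ^ (n - k) * wt n W c)"
      by (rule sum.cong) auto
    also have "\<dots> = lam ^ (n - k) * sigma n W k"
      by (simp add: sigma_eq[OF nonneg noloop] sum_distrib_left)
    finally show "(\<Sum>c\<in>{c\<in>?A. nfix n c = k}. lam ^ (n - nfix n c) * wt n W c) = sigma n W k * lam ^ (n - k)"
      by simp
  qed
  finally show ?thesis .
qed

lemma acyc_upd:
  assumes "acyc n c1" shows "acyc n (c1(j := j))"
proof -
  let ?c0 = "c1(j := j)"
  have *: "\<exists>k'. ?c0 ((?c0^^k') v) = (?c0^^k') v" if "c1 ((c1^^k) v) = (c1^^k) v" for k v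
    using that
  proof (induction k arbitrary: v)
    case 0
    then show ?case by (intro exI[of _ 0]) (cases "v = j"; simp)
  next
    case (Suc k)
    show ?case
    proof (cases "v = j")
      case True then show ?thesis by (intro exI[of _ 0]) simp
    next
      case False
      have "(c1^^Suc k) v = (c1^^k) (c1 v)" by (simp add: funpow_Suc_right del: funpow.simps)
      then have "c1 ((c1^^k) (c1 v)) = (c1^^k) (c1 v)" using Suc.prems by simp
      then obtain k'' where k'': "?c0 ((?c0^^k'') (c1 v)) = (?c0^^k'') (c1 v)" using Suc.IH by blast
      have "(?c0^^Suc k'') v = (?c0^^k'') (c1 v)" using False by (simp add: funpow_Suc_right del: funpow.simps)
      then show ?thesis using k'' by metis
    qed
  qed
  show ?thesis using assms * unfolding acyc_def by blast
qed

lemma det_row_sub: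
  fixes A B C :: "real mat"
  assumes A: "A \<in> carrier_mat n n" and B: "B \<in> carrier_mat n n" and C: "C \<in> carrier_mat n n" and j: "j < n"
    and rows: "\<And>v u. v < n \<Longrightarrow> u < n \<Longrightarrow> v \<noteq> j \<Longrightarrow> A $$ (v,u) = B $$ (v,u) \<and> A $$ (v,u) = C $$ (v,u)"
    and rowj: "\<And>u. u < n \<Longrightarrow> A $$ (j,u) = B $$ (j,u) - C $$ (j,u)"
  shows "det A = det B - det C"
proof -
  let ?P = "{p. p permutes {0..<n}}"
  have pin: "p i < n" if "p \<in> ?P" "i < n" for p i
    using that permutes_in_image[of p "{0..<n}" i] by auto
  have tm: "signof p * (\<Prod>i=0..<n. A $$ (i, p i)) = signof p * (\<Prod>i=0..<n. B $$ (i, p i)) - signof p * (\<Prod>i=0..<n. C $$ (i, p i))"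
    if p: "p \<in> ?P" for p
  proof -
    have jn: "j \<in> {0..<n}" using j by simp
    have eA: "(\<Prod>i=0..<n. A $$ (i, p i)) = A $$ (j, p j) * (\<Prod>i\<in>{0..<n} - {j}. A $$ (i, p i))"
      by (rule prod.remove[OF _ jn]) simp
    have eB: "(\<Prod>i=0..<n. B $$ (i, p i)) = B $$ (j, p j) * (\<Prod>i\<in>{0..<n} - {j}. B $$ (i, p i))"
      by (rule prod.remove[OF _ jn]) simp
    have eC: "(\<Prod>i=0..<n. C $$ (i, p i)) = C $$ (j, p j) * (\<Prod>i\<in>{0..<n} - {j}. C $$ (i, p i))"
      by (rule prod.remove[OF _ jn]) simp
    have rB: "\<And>v u. v < n \<Longrightarrow> u < n \<Longrightarrow> v \<noteq> j \<Longrightarrow> A $$ (v,u) = B $$ (v,u)" using rows by blast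
    have rC: "\<And>v u. v < n \<Longrightarrow> u < n \<Longrightarrow> v \<noteq> j \<Longrightarrow> A $$ (v,u) = C $$ (v,u)" using rows by blast
    have hB: "(\<Prod>i\<in>{0..<n} - {j}. B $$ (i, p i)) = (\<Prod>i\<in>{0..<n} - {j}. A $$ (i, p i))"
      by (rule prod.cong) (use rB pin[OF p] in auto)
    have hC: "(\<Prod>i\<in>{0..<n} - {j}. C $$ (i, p i)) = (\<Prod>i\<in>{0..<n} - {j}. A $$ (i, p i))"
      by (rule prod.cong) (use rC pin[OF p] in auto)
    have hj: "A $$ (j, p j) = B $$ (j, p j) - C $$ (j, p j)" using rowj pin[OF p j] by simp
    show ?thesis unfolding eA eB eC hB hC hj by (simp add: algebra_simps)
  qed
  show ?thesis
    unfolding det_def'[OF A] det_def'[OF B] det_def'[OF C] sum_subtractf[symmetric]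
    by (rule sum.cong) (use tm in auto)
qed

lemma adj_entry_det:
  fixes A :: "real mat"
  assumes A: "A \<in> carrier_mat n n" and i: "i < n" and j: "j < n"
  shows "adj_mat A $$ (i,j) = det (mat n n (\<lambda>(v,u). if v = j then (if u = i then 1 else 0) else A $$ (v,u)))"
proof -
  define B where "B = mat n n (\<lambda>(v,u). if v = j then (if u = i then 1 else 0) else A $$ (v,u))"
  have Bc: "B \<in> carrier_mat n n" unfolding B_def by simp
  have "adj_mat A $$ (i,j) = cofactor A j i" unfolding adj_mat_def using A i j by simp
  also have "mat_delete A j i = mat_delete B j i"
    unfolding mat_delete_def B_def using A j by (intro eq_matI) auto
  then have "cofactor A j i = cofactor B j i" unfolding cofactor_def by simp
  also have "cofactor B j i = (\<Sum>u<n. B $$ (j,u) * cofactor B j u)"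
  proof -
    have "(\<Sum>u<n. B $$ (j,u) * cofactor B j u) = (\<Sum>u<n. if u = i then cofactor B j u else 0)"
      by (rule sum.cong) (auto simp: B_def j)
    also have "\<dots> = cofactor B j i" using i by (simp add: sum.delta')
    finally show ?thesis by simp
  qed
  also have "\<dots> = det B" by (rule laplace_expansion_row[OF Bc j, symmetric])
  finally show ?thesis unfolding B_def .
qed

definition Dm :: "nat \<Rightarrow> nat \<Rightarrow> nat \<Rightarrow> (nat \<Rightarrow> nat) \<Rightarrow> real" where
  "Dm n i j c = det (mat n n (\<lambda>(v,u). if v = j then (if u = i then 1 else 0) else mm c v u))"

lemma Dm_acyc:
  assumes c: "c \<in> {0..<n} \<rightarrow>\<^sub>E {0..<n}" and cj: "c j = j" and i: "i < n" and j: "j < n"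
    and nz: "Dm n i j c \<noteq> 0"
  shows "acyc n c"
proof (rule ccontr)
  assume nac: "\<not> acyc n c"
  show False
  proof (cases "i = j")
    case True
    have "mat n n (\<lambda>(v,u). if v = j then (if u = i then 1 else 0) else mm c v u) = Mc n c"
      unfolding Mc_def mm_def using True cj by (intro eq_matI) auto
    then show False using nz detM_cyc[OF c nac] unfolding Dm_def by simp
  next
    case False
    define c1 where "c1 = c(j := i)"
    have c1: "c1 \<in> {0..<n} \<rightarrow>\<^sub>E {0..<n}" using c i j unfolding c1_def by (auto simp: PiE_def extensional_def)
    have "c1(j := j) = c" unfolding c1_def using cj by auto
    then have nac1: "\<not> acyc n c1" using acyc_upd[of n c1 j] nac by auto
    have "Dm n i j c = det (Mc n c) - det (Mc n c1)"
      unfolding Dm_def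
      by (rule det_row_sub[OF _ _ _ j]) (use False cj j in \<open>auto simp: Mc_def mm_def c1_def\<close>)
    then show False using nz detM_cyc[OF c nac] detM_cyc[OF c1 nac1] by simp
  qed
qed

definition qq :: "nat \<Rightarrow> (nat \<Rightarrow> nat \<Rightarrow> real) \<Rightarrow> nat \<Rightarrow> nat \<Rightarrow> nat \<Rightarrow> real" where
  "qq n W i j k = (\<Sum>c\<in>{c\<in>{0..<n} \<rightarrow>\<^sub>E {0..<n}. c j = j \<and> nfix n c = k}. wt n W c * Dm n i j c)"

lemma qq_zero:
  assumes nonneg: "\<forall>i<n. \<forall>j<n. W i j \<ge> 0" and i: "i < n" and j: "j < n"
    and k: "k > n - in_forest_dim n W"
  shows "qq n W i j k = 0"
  unfolding qq_def
proof (rule sum.neutral, rule ballI)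
  fix c assume c: "c \<in> {c\<in>{0..<n} \<rightarrow>\<^sub>E {0..<n}. c j = j \<and> nfix n c = k}"
  show "wt n W c * Dm n i j c = 0"
  proof (rule ccontr)
    assume nz: "wt n W c * Dm n i j c \<noteq> 0"
    then have ac: "acyc n c" using Dm_acyc[of c n j i] c i j by auto
    have "W v (c v) > 0" if "v < n" "c v \<noteq> v" for v
    proof -
      have "W v (c v) \<noteq> 0" using nz that unfolding wt_def by (auto simp: prod_zero_iff)
      moreover have "c v < n" using c that by auto
      ultimately show ?thesis using nonneg that by force
    qed
    then have "good n W c" using c ac unfolding good_def by auto
    then show False using good_nfix_le c k by fastforce
  qed
qed

lemma adj_AL:
  assumes i: "i < n" and j: "j < n"
  shows "adj_mat (AL n W lam) $$ (i,j) = (\<Sum>k=0..n. lam ^ (n - 1 - k) * qq n W i j k)"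
proof -
  let ?C = "{0..<n} \<rightarrow>\<^sub>E {0..<n}"
  define s' where "s' v w = (if v = j then (if w = j then 1 else 0) else (if w = v then lam else W v w))" for v w
  define m' where "m' v w u = (if v = j then (if u = i then 1 else (0::real)) else
      (if w = v then (if u = v then 1 else 0) else (if u = v then 1 else 0) - (if u = w then 1 else 0)))" for v w u :: nat
  have "adj_mat (AL n W lam) $$ (i,j) = det (mat n n (\<lambda>(v,u). if v = j then (if u = i then 1 else 0) else AL n W lam $$ (v,u)))"
    by (rule adj_entry_det[OF AL_carrier i j])
  also have "\<dots> = (\<Sum>c\<in>?C. (\<Prod>v\<in>{0..<n}. s' v (c v)) * det (mat n n (\<lambda>(v,u). m' v (c v) u)))"
  proof (rule det_expand)
    fix v u assume v: "v < n" and u: "u < n"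
    show "mat n n (\<lambda>(v,u). if v = j then (if u = i then 1 else 0) else AL n W lam $$ (v,u)) $$ (v,u) =
        (\<Sum>w\<in>{0..<n}. s' v w * m' v w u)"
    proof (cases "v = j")
      case True
      then show ?thesis using v u j by (simp add: s'_def m'_def sum.delta')
    next
      case False
      then show ?thesis using v u by (simp add: s'_def m'_def AL_index)
    qed
  qed simp
  also have "\<dots> = (\<Sum>c\<in>?C. if c j = j then lam ^ (n - 1 - nfix n c) * (wt n W c * Dm n i j c) else 0)"
  proof (rule sum.cong[OF refl])
    fix c assume c: "c \<in> ?C"
    have M: "mat n n (\<lambda>(v,u). m' v (c v) u) = mat n n (\<lambda>(v,u). if v = j then (if u = i then 1 else 0) else mm c v u)"
      unfolding m'_def mm_def by (intro eq_matI) auto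
    show "(\<Prod>v\<in>{0..<n}. s' v (c v)) * det (mat n n (\<lambda>(v,u). m' v (c v) u)) =
        (if c j = j then lam ^ (n - 1 - nfix n c) * (wt n W c * Dm n i j c) else 0)"
    proof (cases "c j = j")
      case False
      have "(\<Prod>v\<in>{0..<n}. s' v (c v)) = 0"
        by (rule prod_zero) (use j False in \<open>auto simp: s'_def intro!: bexI[of _ j]\<close>)
      then show ?thesis using False by simp
    next
      case True
      have jn: "j \<in> {0..<n}" using j by simp
      have "(\<Prod>v\<in>{0..<n}. s' v (c v)) = s' j (c j) * (\<Prod>v\<in>{0..<n} - {j}. s' v (c v))"
        by (rule prod.remove[OF _ jn]) simp
      also have "\<dots> = (\<Prod>v\<in>{0..<n} - {j}. (if c v = v then lam else W v (c v)))"
        using True by (simp add: s'_def eq_commute[of "c _"])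
      also have "\<dots> = (\<Prod>v\<in>({0..<n} - {j}) \<inter> {v. c v = v}. lam) * (\<Prod>v\<in>({0..<n} - {j}) \<inter> - {v. c v = v}. W v (c v))"
        by (rule prod.If_cases) simp
      also have "({0..<n} - {j}) \<inter> - {v. c v = v} = {v. v < n \<and> c v \<noteq> v}" using True by auto
      also have "({0..<n} - {j}) \<inter> {v. c v = v} = {v. v < n \<and> c v = v} - {j}" by auto
      finally have pe: "(\<Prod>v\<in>{0..<n}. s' v (c v)) = (\<Prod>v\<in>{v. v < n \<and> c v = v} - {j}. lam) * (\<Prod>v\<in>{v. v < n \<and> c v \<noteq> v}. W v (c v))" .
      have cd: "card ({v. v < n \<and> c v = v} - {j}) = n - 1 - nfix n c"
        using card_fix_nfix[of n c] True j by (simp add: card_Diff_singleton)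
      have "(\<Prod>v\<in>{0..<n}. s' v (c v)) = lam ^ (n - 1 - nfix n c) * wt n W c"
        unfolding wt_def pe by (simp add: prod_constant cd)
      then show ?thesis using True M unfolding Dm_def by simp
    qed
  qed
  also have "\<dots> = (\<Sum>c\<in>{c\<in>?C. c j = j}. lam ^ (n - 1 - nfix n c) * (wt n W c * Dm n i j c))"
    by (simp add: sum.inter_filter[symmetric] finite_PiE)
  also have "\<dots> = (\<Sum>k\<in>{0..n}. \<Sum>c\<in>{c\<in>{c\<in>?C. c j = j}. nfix n c = k}. lam ^ (n - 1 - nfix n c) * (wt n W c * Dm n i j c))"
  proof (rule sum.group[symmetric])
    show "finite {c\<in>?C. c j = j}" by (simp add: finite_PiE)
    have "nfix n c \<le> n" for c using card_fix_nfix[of n c] by linarith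
    then show "nfix n ` {c\<in>?C. c j = j} \<subseteq> {0..n}" by auto
  qed simp
  also have "\<dots> = (\<Sum>k=0..n. lam ^ (n - 1 - k) * qq n W i j k)"
  proof (rule sum.cong[OF refl])
    fix k assume "k \<in> {0..n}"
    have "(\<Sum>c\<in>{c\<in>{c\<in>?C. c j = j}. nfix n c = k}. lam ^ (n - 1 - nfix n c) * (wt n W c * Dm n i j c)) =
       (\<Sum>c\<in>{c\<in>?C. c j = j \<and> nfix n c = k}. lam ^ (n - 1 - k) * (wt n W c * Dm n i j c))"
      by (rule sum.cong) auto
    then show "(\<Sum>c\<in>{c\<in>{c\<in>?C. c j = j}. nfix n c = k}. lam ^ (n - 1 - nfix n c) * (wt n W c * Dm n i j c)) =
       lam ^ (n - 1 - k) * qq n W i j k"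
      unfolding qq_def by (simp add: sum_distrib_left)
  qed
  finally show ?thesis .
qed

lemma polyfun0:
  fixes c :: "nat \<Rightarrow> real"
  assumes all: "\<forall>x. (\<Sum>i\<le>M. c i * x ^ i) = 0" and i: "i \<le> M"
  shows "c i = 0"
proof -
  define p where "p = (\<Sum>i\<le>M. monom (c i) i)"
  have "\<forall>x. poly p x = 0" using all unfolding p_def by (simp add: poly_sum poly_monom)
  then have "p = 0" using poly_all_0_iff_0 by blast
  then have "coeff p i = 0" by simp
  moreover have "coeff p i = c i" unfolding p_def coeff_sum using i by (simp add: sum.delta)
  ultimately show ?thesis by simp
qed

lemma coeff_zero_rev:
  fixes e :: "nat \<Rightarrow> real"
  assumes all: "\<forall>x. (\<Sum>k=0..K. e k * x ^ (M - k)) = 0" and KM: "K \<le> M" and k: "k \<le> K"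
  shows "e k = 0"
proof -
  define c where "c i = (if M - K \<le> i then e (M - i) else 0)" for i
  have eq: "(\<Sum>k=0..K. e k * x ^ (M - k)) = (\<Sum>i\<le>M. c i * x ^ i)" for x :: real
  proof -
    have "(\<Sum>i\<le>M. c i * x ^ i) = (\<Sum>i\<in>{M-K..M}. c i * x ^ i)"
      by (rule sum.mono_neutral_right) (auto simp: c_def)
    also have "\<dots> = (\<Sum>i\<in>{M-K..M}. e (M - i) * x ^ i)"
      by (rule sum.cong) (auto simp: c_def)
    also have "\<dots> = (\<Sum>k=0..K. e k * x ^ (M - k))"
      by (rule sum.reindex_bij_witness[where i="\<lambda>k. M - k" and j="\<lambda>i. M - i"]) (use KM in auto)
    finally show ?thesis by simp
  qed
  have "c (M - k) = 0" by (rule polyfun0) (use all eq in auto)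
  moreover have "M - K \<le> M - k" "M - (M - k) = k" using k KM by auto
  ultimately show ?thesis unfolding c_def by simp
qed

lemma pow_smult_mat:
  fixes A :: "real mat"
  assumes A: "A \<in> carrier_mat n n"
  shows "(a \<cdot>\<^sub>m A) ^\<^sub>m k = a ^ k \<cdot>\<^sub>m (A ^\<^sub>m k)"
proof (induction k)
  case 0 then show ?case using A by (auto intro!: eq_matI)
next
  case (Suc k)
  have Ak: "A ^\<^sub>m k \<in> carrier_mat n n" using A by simp
  have "(a \<cdot>\<^sub>m A) ^\<^sub>m Suc k = (a ^ k \<cdot>\<^sub>m (A ^\<^sub>m k)) * (a \<cdot>\<^sub>m A)" using Suc by simp
  also have "\<dots> = a ^ k \<cdot>\<^sub>m ((A ^\<^sub>m k) * (a \<cdot>\<^sub>m A))" by (rule mult_smult_assoc_mat[OF Ak, of _ n]) (use A in simp)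
  also have "(A ^\<^sub>m k) * (a \<cdot>\<^sub>m A) = a \<cdot>\<^sub>m ((A ^\<^sub>m k) * A)" by (rule mult_smult_distrib[OF Ak A])
  finally show ?case using A by (auto intro!: eq_matI)
qed

lemma sum_swap_tri:
  fixes f :: "nat \<Rightarrow> nat \<Rightarrow> real"
  shows "(\<Sum>k=0..N. \<Sum>j=0..k. f j (k - j)) = (\<Sum>m=0..N. \<Sum>j=0..N-m. f j m)"
proof -
  have "(\<Sum>k=0..N. \<Sum>j=0..k. f j (k - j)) = (\<Sum>k\<le>N. \<Sum>j\<le>k. f j (k - j))"
    by (simp add: atLeast0AtMost)
  also have "\<dots> = (\<Sum>(j,m)\<in>{(j,m). j + m \<le> N}. f j m)"
    by (rule sum.triangle_reindex_eq[symmetric])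
  also have "{(j,m). j + m \<le> N} = Sigma {..N} (\<lambda>j. {m. m \<in> {..N} \<and> j + m \<le> N})" by auto
  also have "(\<Sum>(j,m)\<in>Sigma {..N} (\<lambda>j. {m. m \<in> {..N} \<and> j + m \<le> N}). f j m) =
      (\<Sum>j\<in>{..N}. \<Sum>m\<in>{m. m \<in> {..N} \<and> j + m \<le> N}. f j m)"
    by (rule sum.Sigma[symmetric]) auto
  also have "\<dots> = (\<Sum>m\<in>{..N}. \<Sum>j\<in>{j. j \<in> {..N} \<and> j + m \<le> N}. f j m)"
    by (rule sum.swap_restrict) auto
  also have "\<dots> = (\<Sum>m=0..N. \<Sum>j=0..N-m. f j m)"
    by (rule sum.cong) (auto intro!: sum.cong)
  finally show ?thesis .
qed

theorem corollary4:
  fixes n :: nat and W :: "nat \<Rightarrow> nat \<Rightarrow> real" and lam :: real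
  assumes "n > 1"
    and "\<forall>i<n. \<forall>j<n. W i j \<ge> 0"
    and "\<forall>i<n. W i i = 0"
    and "lam \<noteq> 0"
  shows "adj_mat (lam \<cdot>\<^sub>m 1\<^sub>m n + laplacian n W) =
    mat n n (\<lambda>(i,j). \<Sum>k = 0..n - in_forest_dim n W.
       s_prime n W (n - in_forest_dim n W - k) lam *
       (((- 1 / lam) \<cdot>\<^sub>m laplacian n W) ^\<^sub>m k) $$ (i,j))"
proof -
  note n1 = assms(1) and nonneg = assms(2) and noloop = assms(3) and lam0 = assms(4)
  define N where "N = n - in_forest_dim n W"
  have d1: "in_forest_dim n W \<ge> 1" by (rule dim_ge1) (use n1 in simp)
  have NN: "N < n" unfolding N_def using d1 n1 by simp
  define L where "L = laplacian n W"
  have Lc: "L \<in> carrier_mat n n" unfolding L_def laplacian_def by simp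
  have sigz: "sigma n W k = 0" if "k > N" for k using sigma_zero[of n W k, OF noloop] that unfolding N_def by simp
  have qqz: "qq n W a b k = 0" if "a < n" "b < n" "k > N" for a b k
    using qq_zero[of n W a b k, OF nonneg] that unfolding N_def by simp
  have adjf: "adj_mat (AL n W x) $$ (a,b) = (\<Sum>k=0..N. x ^ (n - 1 - k) * qq n W a b k)"
    if ab: "a < n" "b < n" for x a b
  proof -
    have "adj_mat (AL n W x) $$ (a,b) = (\<Sum>k=0..n. x ^ (n - 1 - k) * qq n W a b k)"
      by (rule adj_AL[OF ab])
    also have "\<dots> = (\<Sum>k=0..N. x ^ (n - 1 - k) * qq n W a b k)"
      by (rule sum.mono_neutral_right) (use NN qqz ab in auto)
    finally show ?thesis .
  qed
  have detf: "det (AL n W x) = (\<Sum>k=0..N. sigma n W k * x ^ (n - k))" for x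
  proof -
    have "det (AL n W x) = (\<Sum>k=0..n. sigma n W k * x ^ (n - k))"
      by (rule det_AL_sigma[OF nonneg noloop])
    also have "\<dots> = (\<Sum>k=0..N. sigma n W k * x ^ (n - k))"
      by (rule sum.mono_neutral_right) (use NN sigz in auto)
    finally show ?thesis .
  qed
  have ALe: "AL n W x $$ (u,b) = x * (if u = b then 1 else 0) + L $$ (u,b)" if "u < n" "b < n" for x u b
    using that Lc unfolding AL_def L_def by simp
  define P where "P a b k = (\<Sum>u\<in>{0..<n}. qq n W a u k * L $$ (u,b))" for a b k
  have rec: "qq n W a b k + (if k = 0 then 0 else P a b (k - 1)) = sigma n W k * (if a = b then 1 else 0)"
    if ab: "a < n" "b < n" and k: "k \<le> N" for a b k
  proof -
    define e where "e k = qq n W a b k + (if k = 0 then 0 else P a b (k - 1)) - sigma n W k * (if a = b then 1 else 0)" for k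
    have all: "\<forall>x. (\<Sum>k=0..Suc N. e k * x ^ (n - k)) = 0"
    proof
      fix x :: real
      have "(adj_mat (AL n W x) * AL n W x) $$ (a,b) = (det (AL n W x) \<cdot>\<^sub>m 1\<^sub>m n) $$ (a,b)"
        using adj_mat(3)[OF AL_carrier] by simp
      then have "(\<Sum>u\<in>{0..<n}. adj_mat (AL n W x) $$ (a,u) * AL n W x $$ (u,b)) = det (AL n W x) * (if a = b then 1 else 0)"
        using ab adj_mat(1)[OF AL_carrier, of n W x] AL_carrier[of n W x] by (simp add: scalar_prod_def)
      moreover have "(\<Sum>u\<in>{0..<n}. adj_mat (AL n W x) $$ (a,u) * AL n W x $$ (u,b)) =
          x * adj_mat (AL n W x) $$ (a,b) + (\<Sum>u\<in>{0..<n}. adj_mat (AL n W x) $$ (a,u) * L $$ (u,b))"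
      proof -
        have "(\<Sum>u\<in>{0..<n}. adj_mat (AL n W x) $$ (a,u) * AL n W x $$ (u,b)) =
          (\<Sum>u\<in>{0..<n}. (if u = b then x * adj_mat (AL n W x) $$ (a,u) else 0) + adj_mat (AL n W x) $$ (a,u) * L $$ (u,b))"
          by (rule sum.cong) (auto simp: ALe ab algebra_simps)
        also have "\<dots> = x * adj_mat (AL n W x) $$ (a,b) + (\<Sum>u\<in>{0..<n}. adj_mat (AL n W x) $$ (a,u) * L $$ (u,b))"
          using ab by (simp add: sum.distrib sum.delta')
        finally show ?thesis .
      qed
      moreover have "x * adj_mat (AL n W x) $$ (a,b) = (\<Sum>k=0..N. qq n W a b k * x ^ (n - k))"
      proof -
        have "x * adj_mat (AL n W x) $$ (a,b) = (\<Sum>k=0..N. x * x ^ (n - 1 - k) * qq n W a b k)"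
          by (simp add: adjf[OF ab] sum_distrib_left mult_ac)
        also have "\<dots> = (\<Sum>k=0..N. qq n W a b k * x ^ (n - k))"
        proof (rule sum.cong[OF refl])
          fix k assume "k \<in> {0..N}"
          then have "n - k = Suc (n - 1 - k)" using NN by auto
          then show "x * x ^ (n - 1 - k) * qq n W a b k = qq n W a b k * x ^ (n - k)" by simp
        qed
        finally show ?thesis .
      qed
      moreover have "(\<Sum>u\<in>{0..<n}. adj_mat (AL n W x) $$ (a,u) * L $$ (u,b)) = (\<Sum>k=0..N. P a b k * x ^ (n - 1 - k))"
      proof -
        have "(\<Sum>u\<in>{0..<n}. adj_mat (AL n W x) $$ (a,u) * L $$ (u,b)) =
            (\<Sum>u\<in>{0..<n}. \<Sum>k=0..N. x ^ (n - 1 - k) * qq n W a u k * L $$ (u,b))"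
          by (rule sum.cong[OF refl]) (use ab in \<open>auto simp: adjf sum_distrib_right\<close>)
        also have "\<dots> = (\<Sum>k=0..N. \<Sum>u\<in>{0..<n}. x ^ (n - 1 - k) * qq n W a u k * L $$ (u,b))"
          by (rule sum.swap)
        also have "\<dots> = (\<Sum>k=0..N. P a b k * x ^ (n - 1 - k))"
          unfolding P_def by (simp add: sum_distrib_left sum_distrib_right mult_ac)
        finally show ?thesis .
      qed
      ultimately have main: "(\<Sum>k=0..N. qq n W a b k * x ^ (n - k)) + (\<Sum>k=0..N. P a b k * x ^ (n - 1 - k))
          - (\<Sum>k=0..N. sigma n W k * x ^ (n - k)) * (if a = b then 1 else 0) = 0"
        by (simp add: detf)
      have s1: "(\<Sum>k=0..Suc N. qq n W a b k * x ^ (n - k)) = (\<Sum>k=0..N. qq n W a b k * x ^ (n - k))"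
        using qqz[OF ab, of "Suc N"] by simp
      have s3: "(\<Sum>k=0..Suc N. sigma n W k * x ^ (n - k)) = (\<Sum>k=0..N. sigma n W k * x ^ (n - k))"
        using sigz[of "Suc N"] by simp
      have s2: "(\<Sum>k=0..Suc N. (if k = 0 then 0 else P a b (k - 1)) * x ^ (n - k)) = (\<Sum>k=0..N. P a b k * x ^ (n - 1 - k))"
        by (subst sum.atLeast0_atMost_Suc_shift) simp
      have "(\<Sum>k=0..Suc N. e k * x ^ (n - k)) = (\<Sum>k=0..Suc N. qq n W a b k * x ^ (n - k))
          + (\<Sum>k=0..Suc N. (if k = 0 then 0 else P a b (k - 1)) * x ^ (n - k))
          - (\<Sum>k=0..Suc N. sigma n W k * x ^ (n - k)) * (if a = b then 1 else 0)"
        unfolding e_def by (simp add: algebra_simps sum.distrib sum_subtractf sum_distrib_right)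
      also have "\<dots> = 0" unfolding s1 s2 s3 using main .
      finally show "(\<Sum>k=0..Suc N. e k * x ^ (n - k)) = 0" .
    qed
    have "e k = 0" by (rule coeff_zero_rev[OF all]) (use k NN in auto)
    then show ?thesis unfolding e_def by simp
  qed
  have cf: "qq n W a b k = (\<Sum>j=0..k. sigma n W j * (- 1) ^ (k - j) * (L ^\<^sub>m (k - j)) $$ (a,b))"
    if "k \<le> N" "a < n" "b < n" for k a b
    using that
  proof (induction k arbitrary: a b)
    case 0
    then show ?case using rec[of a b 0] Lc by simp
  next
    case (Suc k)
    have IH: "qq n W a u k = (\<Sum>j=0..k. sigma n W j * (- 1) ^ (k - j) * (L ^\<^sub>m (k - j)) $$ (a,u))" if "u < n" for u
      using Suc that by simp
    have "P a b k = (\<Sum>u\<in>{0..<n}. \<Sum>j=0..k. sigma n W j * (- 1) ^ (k - j) * ((L ^\<^sub>m (k - j)) $$ (a,u) * L $$ (u,b)))"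
      unfolding P_def by (rule sum.cong[OF refl]) (auto simp: IH sum_distrib_right sum_distrib_left mult_ac)
    also have "\<dots> = (\<Sum>j=0..k. sigma n W j * (- 1) ^ (k - j) * (\<Sum>u\<in>{0..<n}. (L ^\<^sub>m (k - j)) $$ (a,u) * L $$ (u,b)))"
      by (subst sum.swap) (simp add: sum_distrib_left)
    also have "\<dots> = (\<Sum>j=0..k. sigma n W j * (- 1) ^ (k - j) * (L ^\<^sub>m (Suc k - j)) $$ (a,b))"
    proof (rule sum.cong[OF refl])
      fix j assume "j \<in> {0..k}"
      then have "Suc k - j = Suc (k - j)" by auto
      then have "(L ^\<^sub>m (Suc k - j)) $$ (a,b) = (\<Sum>u\<in>{0..<n}. (L ^\<^sub>m (k - j)) $$ (a,u) * L $$ (u,b))"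
        using Lc Suc.prems by (simp add: scalar_prod_def)
      then show "sigma n W j * (- 1) ^ (k - j) * (\<Sum>u\<in>{0..<n}. (L ^\<^sub>m (k - j)) $$ (a,u) * L $$ (u,b)) =
          sigma n W j * (- 1) ^ (k - j) * (L ^\<^sub>m (Suc k - j)) $$ (a,b)" by simp
    qed
    finally have Pe: "P a b k = \<dots>" .
    have "qq n W a b (Suc k) = sigma n W (Suc k) * (if a = b then 1 else 0) - P a b k"
      using rec[of a b "Suc k"] Suc.prems by simp
    also have "\<dots> = sigma n W (Suc k) * (- 1) ^ (Suc k - Suc k) * (L ^\<^sub>m (Suc k - Suc k)) $$ (a,b)
        + (\<Sum>j=0..k. sigma n W j * (- 1) ^ (Suc k - j) * (L ^\<^sub>m (Suc k - j)) $$ (a,b))"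
    proof -
      have "(\<Sum>j=0..k. sigma n W j * (- 1) ^ (Suc k - j) * (L ^\<^sub>m (Suc k - j)) $$ (a,b)) =
          - (\<Sum>j=0..k. sigma n W j * (- 1) ^ (k - j) * (L ^\<^sub>m (Suc k - j)) $$ (a,b))"
        unfolding sum_negf[symmetric]
        by (rule sum.cong[OF refl]) (auto simp: Suc_diff_le)
      then show ?thesis using Pe Suc.prems Lc by simp
    qed
    also have "\<dots> = (\<Sum>j=0..Suc k. sigma n W j * (- 1) ^ (Suc k - j) * (L ^\<^sub>m (Suc k - j)) $$ (a,b))"
      by (simp add: add.commute)
    finally show ?case .
  qed
  show ?thesis
  proof (rule eq_matI)
    show "dim_row (adj_mat (lam \<cdot>\<^sub>m 1\<^sub>m n + laplacian n W)) = dim_row (mat n n (\<lambda>(i,j). \<Sum>k = 0..n - in_forest_dim n W.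
       s_prime n W (n - in_forest_dim n W - k) lam * (((- 1 / lam) \<cdot>\<^sub>m laplacian n W) ^\<^sub>m k) $$ (i,j)))"
      using adj_mat(1)[OF AL_carrier, of n W lam] unfolding AL_def by simp
    show "dim_col (adj_mat (lam \<cdot>\<^sub>m 1\<^sub>m n + laplacian n W)) = dim_col (mat n n (\<lambda>(i,j). \<Sum>k = 0..n - in_forest_dim n W.
       s_prime n W (n - in_forest_dim n W - k) lam * (((- 1 / lam) \<cdot>\<^sub>m laplacian n W) ^\<^sub>m k) $$ (i,j)))"
      using adj_mat(1)[OF AL_carrier, of n W lam] unfolding AL_def by simp
  next
    fix a b
    assume "a < dim_row (mat n n (\<lambda>(i,j). \<Sum>k = 0..n - in_forest_dim n W.
       s_prime n W (n - in_forest_dim n W - k) lam * (((- 1 / lam) \<cdot>\<^sub>m laplacian n W) ^\<^sub>m k) $$ (i,j)))"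
      and "b < dim_col (mat n n (\<lambda>(i,j). \<Sum>k = 0..n - in_forest_dim n W.
       s_prime n W (n - in_forest_dim n W - k) lam * (((- 1 / lam) \<cdot>\<^sub>m laplacian n W) ^\<^sub>m k) $$ (i,j)))"
    then have ab: "a < n" "b < n" by auto
    define f where "f j m = sigma n W j * (- 1) ^ m * lam ^ (n - 1 - j - m) * (L ^\<^sub>m m) $$ (a,b)" for j m
    have "adj_mat (lam \<cdot>\<^sub>m 1\<^sub>m n + laplacian n W) $$ (a,b) = adj_mat (AL n W lam) $$ (a,b)"
      unfolding AL_def ..
    also have "\<dots> = (\<Sum>k=0..N. lam ^ (n - 1 - k) * qq n W a b k)" by (rule adjf[OF ab])
    also have "\<dots> = (\<Sum>k=0..N. \<Sum>j=0..k. f j (k - j))"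
    proof (rule sum.cong[OF refl])
      fix k assume k: "k \<in> {0..N}"
      have "lam ^ (n - 1 - k) * qq n W a b k = (\<Sum>j=0..k. lam ^ (n - 1 - k) * (sigma n W j * (- 1) ^ (k - j) * (L ^\<^sub>m (k - j)) $$ (a,b)))"
        using cf[of k a b] k ab by (simp add: sum_distrib_left)
      also have "\<dots> = (\<Sum>j=0..k. f j (k - j))"
      proof (rule sum.cong[OF refl])
        fix j assume "j \<in> {0..k}"
        then have "n - 1 - j - (k - j) = n - 1 - k" by auto
        then show "lam ^ (n - 1 - k) * (sigma n W j * (- 1) ^ (k - j) * (L ^\<^sub>m (k - j)) $$ (a,b)) = f j (k - j)"
          unfolding f_def by simp
      qed
      finally show "lam ^ (n - 1 - k) * qq n W a b k = (\<Sum>j=0..k. f j (k - j))" .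
    qed
    also have "\<dots> = (\<Sum>m=0..N. \<Sum>j=0..N-m. f j m)" by (rule sum_swap_tri)
    also have "\<dots> = (\<Sum>m=0..N. s_prime n W (N - m) lam * (((- 1 / lam) \<cdot>\<^sub>m L) ^\<^sub>m m) $$ (a,b))"
    proof (rule sum.cong[OF refl])
      fix m assume m: "m \<in> {0..N}"
      have pw: "(((- 1 / lam) \<cdot>\<^sub>m L) ^\<^sub>m m) $$ (a,b) = (- 1 / lam) ^ m * (L ^\<^sub>m m) $$ (a,b)"
        using pow_smult_mat[OF Lc, of "- 1 / lam" m] ab Lc by simp
      have "s_prime n W (N - m) lam * (((- 1 / lam) \<cdot>\<^sub>m L) ^\<^sub>m m) $$ (a,b) =
          (\<Sum>j=0..N-m. sigma n W j * lam powi (int n - int j - 1) * ((- 1 / lam) ^ m * (L ^\<^sub>m m) $$ (a,b)))"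
        unfolding s_prime_def pw by (simp add: sum_distrib_right)
      also have "\<dots> = (\<Sum>j=0..N-m. f j m)"
      proof (rule sum.cong[OF refl])
        fix j assume j: "j \<in> {0..N-m}"
        have ie: "int n - int j - 1 = int (n - 1 - j - m) + int m" using j m NN by auto
        have "lam powi (int n - int j - 1) = lam ^ (n - 1 - j - m) * lam ^ m"
          unfolding ie using lam0 by (simp add: power_int_add)
        moreover have "lam ^ m * (- 1 / lam) ^ m = (- 1) ^ m"
          using lam0 by (simp add: power_mult_distrib[symmetric])
        ultimately show "sigma n W j * lam powi (int n - int j - 1) * ((- 1 / lam) ^ m * (L ^\<^sub>m m) $$ (a,b)) = f j m"
          unfolding f_def by (simp add: mult_ac)
      qed
      finally show "(\<Sum>j=0..N-m. f j m) = s_prime n W (N - m) lam * (((- 1 / lam) \<cdot>\<^sub>m L) ^\<^sub>m m) $$ (a,b)" by simp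
    qed
    also have "\<dots> = mat n n (\<lambda>(i,j). \<Sum>k = 0..n - in_forest_dim n W.
       s_prime n W (n - in_forest_dim n W - k) lam * (((- 1 / lam) \<cdot>\<^sub>m laplacian n W) ^\<^sub>m k) $$ (i,j)) $$ (a,b)"
      using ab unfolding N_def L_def by simp
    finally show "adj_mat (lam \<cdot>\<^sub>m 1\<^sub>m n + laplacian n W) $$ (a,b) = mat n n (\<lambda>(i,j). \<Sum>k = 0..n - in_forest_dim n W.
       s_prime n W (n - in_forest_dim n W - k) lam * (((- 1 / lam) \<cdot>\<^sub>m laplacian n W) ^\<^sub>m k) $$ (i,j)) $$ (a,b)" .
  qed
qed

end
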